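(* Let $v\in T_1^\circ$ be a term of size $p$, let $\vec t=(t_1,\dots,t_p)$ be a sequence of terms of $T_1^*$, and let $t=v[\vec t]$. Then for every $\gamma\in B_\bullet$, $$t(\gamma)=t_1(\gamma)\cdot\partial t_2(\gamma)\cdot\ \cdots\ \cdot\partial^{p-1}t_p(\gamma)\cdot v(1).$$
   Context: $T_1^*$ (resp. $T_1^\circ$) is the set of terms in the single variable $x$ built using a binary operator $*$ (resp. $\circ$); the size of a term is its number of variable occurrences. $v[\vec t]$ is the term obtained from $v$ by substituting $t_1,\dots,t_p$ for the variable occurrences of $v$ enumerated from left to right. For a term $t$ and $\gamma\in B_\bullet$, $t(\gamma)$ is the evaluation of $t$ at $\gamma$ in $(B_\bullet,*,\circ)$, and $v(1)$ is the evaluation at the identity $1$. The group $B_\bullet$ is generated by $\sigma_1,\sigma_2,\dots$ and $a_1,a_2,\dots$ subject to: $\sigma_j\sigma_i=\sigma_i\sigma_j$ and $a_j\sigma_i=\sigma_ia_j$ for $j\ge i+2$; $a_j\sigma_i=\sigma_{i+1}a_j$ and $a_ja_i=a_{i+1}a_j$ for $j\le i-1$; $\sigma_j\sigma_i\sigma_j=\sigma_i\sigma_j\sigma_i$, $\sigma_i\sigma_ja_i=a_j\sigma_i$ and $\sigma_j\sigma_ia_j=a_i\sigma_i$ for $j=i+1$. $\partial$ is the endomorphism of $B_\bullet$ with $\partial\sigma_i=\sigma_{i+1}$, $\partial a_i=a_{i+1}$. The operations are $\beta*\gamma=\beta\cdot\partial\gamma\cdot\sigma_1\cdot\partial\beta^{-1}$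 and $\beta\circ\gamma=\beta\cdot\partial\gamma\cdot a_1$. *)

theory Defs
  imports Main
begin

text \<open>Generators, 0-based: S i stands for sigma_(i+1), A i stands for a_(i+1).
  All defining relations are invariant under this index shift.\<close>

datatype gen = S nat | A nat

type_synonym word = "(gen \<times> bool) list"  (* (g, True) = g, (g, False) = g^-1 *)

definition pos :: "gen \<Rightarrow> gen \<times> bool" where "pos g = (g, True)"

inductive brel :: "word \<Rightarrow> word \<Rightarrow> bool" where
  r1: "j \<ge> i + 2 \<Longrightarrow> brel [pos (S j), pos (S i)] [pos (S i), pos (S j)]"
| r2: "j \<ge> i + 2 \<Longrightarrow> brel [pos (A j), pos (S i)] [pos (S i), pos (A j)]"
| r3: "j + 1 \<le> i \<Longrightarrow> brel [pos (A j), pos (S i)] [pos (S (Suc i)), pos (A j)]"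
| r4: "j + 1 \<le> i \<Longrightarrow> brel [pos (A j), pos (A i)] [pos (A (Suc i)), pos (A j)]"
| r5: "brel [pos (S (Suc i)), pos (S i), pos (S (Suc i))] [pos (S i), pos (S (Suc i)), pos (S i)]"
| r6: "brel [pos (S i), pos (S (Suc i)), pos (A i)] [pos (A (Suc i)), pos (S i)]"
| r7: "brel [pos (S (Suc i)), pos (S i), pos (A (Suc i))] [pos (A i), pos (S i)]"

inductive beqv :: "word \<Rightarrow> word \<Rightarrow> bool" where
  refl: "beqv u u"
| sym: "beqv u v \<Longrightarrow> beqv v u"
| trans: "beqv u v \<Longrightarrow> beqv v w \<Longrightarrow> beqv u w"
| cong: "beqv u u' \<Longrightarrow> beqv v v' \<Longrightarrow> beqv (u @ v) (u' @ v')"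
| cancel: "beqv [(g, b), (g, \<not> b)] []"
| rel: "brel u v \<Longrightarrow> beqv u v"

lemma beqv_equivp: "equivp beqv"
  by (rule equivpI; auto simp: reflp_def symp_def transp_def intro: beqv.intros)

quotient_type B = word / beqv
  by (rule beqv_equivp)

lift_definition bone :: B is "[]" .

lift_definition bmul :: "B \<Rightarrow> B \<Rightarrow> B" is "(@)"
  by (rule beqv.cong)

definition binv :: "B \<Rightarrow> B" where
  "binv x = (SOME y. bmul x y = bone \<and> bmul y x = bone)"

lift_definition bsig1 :: B is "[pos (S 0)]" .
lift_definition ba1 :: B is "[pos (A 0)]" .

fun shg :: "gen \<Rightarrow> gen" where
  "shg (S i) = S (Suc i)" | "shg (A i) = A (Suc i)"

definition shw :: "word \<Rightarrow> word" where
  "shw w = map (\<lambda>(g, b). (shg g, b)) w"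

lemma brel_shift: "brel u v \<Longrightarrow> brel (shw u) (shw v)"
  by (induction rule: brel.induct) (auto simp: shw_def pos_def intro: brel.intros[unfolded pos_def])

lemma beqv_shift: "beqv u v \<Longrightarrow> beqv (shw u) (shw v)"
proof (induction rule: beqv.induct)
  case (cong u u' v v') then show ?case by (simp add: shw_def beqv.cong)
next
  case (cancel g b) then show ?case by (simp add: shw_def beqv.cancel)
qed (auto intro: beqv.intros brel_shift)

lift_definition bdel :: "B \<Rightarrow> B" is shw
  by (rule beqv_shift)

definition bstar :: "B \<Rightarrow> B \<Rightarrow> B" where
  "bstar b c = bmul (bmul (bmul b (bdel c)) bsig1) (bdel (binv b))"

definition bcirc :: "B \<Rightarrow> B \<Rightarrow> B" where
  "bcirc b c = bmul (bmul b (bdel c)) ba1"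

definition bprod :: "B list \<Rightarrow> B" where
  "bprod xs = foldr bmul xs bone"

datatype tm = X | Star tm tm | Circ tm tm

fun is_star :: "tm \<Rightarrow> bool" where
  "is_star X = True"
| "is_star (Star a b) = (is_star a \<and> is_star b)"
| "is_star (Circ a b) = False"

fun is_circ :: "tm \<Rightarrow> bool" where
  "is_circ X = True"
| "is_circ (Circ a b) = (is_circ a \<and> is_circ b)"
| "is_circ (Star a b) = False"

fun tsize :: "tm \<Rightarrow> nat" where
  "tsize X = 1"
| "tsize (Star a b) = tsize a + tsize b"
| "tsize (Circ a b) = tsize a + tsize b"

fun subst :: "tm \<Rightarrow> tm list \<Rightarrow> tm" where
  "subst X ts = hd ts"
| "subst (Star a b) ts = Star (subst a (take (tsize a) ts)) (subst b (drop (tsize a) ts))"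
| "subst (Circ a b) ts = Circ (subst a (take (tsize a) ts)) (subst b (drop (tsize a) ts))"

fun teval :: "tm \<Rightarrow> B \<Rightarrow> B" where
  "teval X g = g"
| "teval (Star a b) g = bstar (teval a g) (teval b g)"
| "teval (Circ a b) g = bcirc (teval a g) (teval b g)"

end

theory Submission
  imports Defs
begin

lemma bmul_assoc: "bmul (bmul x y) z = bmul x (bmul y z)"
  by transfer (simp add: beqv.refl)

lemma bmul_one_l[simp]: "bmul bone x = x"
  by transfer (simp add: beqv.refl)

lemma bmul_one_r[simp]: "bmul x bone = x"
  by transfer (simp add: beqv.refl)

lemma bdel_mul: "bdel (bmul x y) = bmul (bdel x) (bdel y)"
  by transfer (simp add: shw_def beqv.refl)

lemma bdel_one[simp]: "bdel bone = bone"
  by transfer (simp add: shw_def beqv.refl)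

lemma bprod_append: "bprod (xs @ ys) = bmul (bprod xs) (bprod ys)"
  by (induction xs) (simp_all add: bprod_def bmul_assoc)

lemma bdelp_mul: "(bdel ^^ n) (bmul x y) = bmul ((bdel ^^ n) x) ((bdel ^^ n) y)"
  by (induction n) (simp_all add: bdel_mul)

lemma bdelp_one: "(bdel ^^ n) bone = bone"
  by (induction n) simp_all

lemma bdel_bprod: "(bdel ^^ n) (bprod xs) = bprod (map (bdel ^^ n) xs)"
  by (induction xs) (simp_all add: bprod_def bdelp_mul bdelp_one)

lemma congL: "beqv v v' \<Longrightarrow> beqv (u @ v) (u @ v')"
  by (rule beqv.cong[OF beqv.refl])

lemma congR: "beqv u u' \<Longrightarrow> beqv (u @ v) (u' @ v)"
  by (rule beqv.cong[OF _ beqv.refl])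

definition shl :: "gen \<times> bool \<Rightarrow> gen \<times> bool" where
  "shl l = (shg (fst l), snd l)"

lemma pos_letter: "beqv [(A 0, True), (shg g, True)] [(shg (shg g), True), (A 0, True)]"
proof (cases g)
  case (S i)
  have "brel [pos (A 0), pos (S (Suc i))] [pos (S (Suc (Suc i))), pos (A 0)]"
    by (rule brel.r3) simp
  then show ?thesis using S by (simp add: pos_def beqv.rel)
next
  case (A i)
  have "brel [pos (A 0), pos (A (Suc i))] [pos (A (Suc (Suc i))), pos (A 0)]"
    by (rule brel.r4) simp
  then show ?thesis using A by (simp add: pos_def beqv.rel)
qed

lemma letter: "beqv [(A 0, True), shl l] [shl (shl l), (A 0, True)]"
proof -
  obtain g b where l: "l = (g, b)" by (cases l)
  show ?thesis
  proof (cases b)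
    case True then show ?thesis using l pos_letter by (simp add: shl_def)
  next
    case False
    define n1 where "n1 = (shg (shg g), False)"
    define p1 where "p1 = (shg (shg g), True)"
    define a where "a = (A 0, True)"
    define q where "q = (shg g, True)"
    define m where "m = (shg g, False)"
    have H: "beqv [a, q] [p1, a]" using pos_letter unfolding a_def q_def p1_def .
    have c1: "beqv [q, m] []" unfolding q_def m_def using beqv.cancel[of "shg g" True] by simp
    have 1: "beqv [n1, a] [n1, a, q, m]"
      using congL[OF beqv.sym[OF c1], of "[n1, a]"] by simp
    have 2: "beqv [n1, a, q, m] [n1, p1, a, m]"
      using congL[OF congR[OF H, of "[m]"], of "[n1]"] by simp
    have c2: "beqv [n1, p1] []" unfolding n1_def p1_def using beqv.cancel[of "shg (shg g)" False] by simp
    have 3: "beqv [n1, p1, a, m] [a, m]"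
      using congR[OF c2, of "[a, m]"] by simp
    have "beqv [n1, a] [a, m]" using beqv.trans[OF beqv.trans[OF 1 2] 3] .
    then show ?thesis using l False
      by (simp add: shl_def n1_def a_def m_def beqv.sym)
  qed
qed

lemma word_comm: "beqv ([(A 0, True)] @ shw w) (shw (shw w) @ [(A 0, True)])"
proof (induction w)
  case Nil then show ?case by (simp add: shw_def beqv.refl)
next
  case (Cons l w)
  have e1: "shw (l # w) = shl l # shw w"
    by (cases l) (simp add: shw_def shl_def)
  have e2: "shw (shw (l # w)) = shl (shl l) # shw (shw w)"
    by (cases l) (simp add: shw_def shl_def)
  have 1: "beqv ([(A 0, True), shl l] @ shw w) ([shl (shl l), (A 0, True)] @ shw w)"
    by (rule congR[OF letter])
  have 2: "beqv ([shl (shl l)] @ ([(A 0, True)] @ shw w)) ([shl (shl l)] @ (shw (shw w) @ [(A 0, True)]))"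
    by (rule congL[OF Cons])
  have 3: "beqv ((A 0, True) # shl l # shw w) (shl (shl l) # shw (shw w) @ [(A 0, True)])"
    using beqv.trans[OF 1[simplified] 2[simplified]] .
  show ?case by (subst e2, subst e1, simp only: append.simps, rule 3)
qed

lemma a1_comm: "bmul ba1 (bdel x) = bmul (bdel (bdel x)) ba1"
proof transfer
  fix w show "beqv ([pos (A 0)] @ shw w) (shw (shw w) @ [pos (A 0)])"
    unfolding pos_def by (rule word_comm)
qed

lemma comm: "is_circ a \<Longrightarrow> bmul (teval a bone) (bdel x) = bmul ((bdel ^^ tsize a) x) (teval a bone)"
proof (induction a arbitrary: x)
  case X then show ?case by simp
next
  case (Star c d) then show ?case by simp
next
  case (Circ c d)
  let ?c = "teval c bone" and ?d = "teval d bone"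
  have "bmul (teval (Circ c d) bone) (bdel x) = bmul ?c (bmul (bdel ?d) (bmul ba1 (bdel x)))"
    by (simp add: bcirc_def bmul_assoc)
  also have "\<dots> = bmul ?c (bmul (bdel (bmul ?d (bdel x))) ba1)"
    by (simp add: a1_comm bdel_mul bmul_assoc)
  also have "\<dots> = bmul ?c (bmul (bdel (bmul ((bdel ^^ tsize d) x) ?d)) ba1)"
    using Circ by simp
  also have "\<dots> = bmul (bmul ?c (bdel ((bdel ^^ tsize d) x))) (bmul (bdel ?d) ba1)"
    by (simp add: bdel_mul bmul_assoc)
  also have "\<dots> = bmul ((bdel ^^ tsize c) ((bdel ^^ tsize d) x)) (bmul ?c (bmul (bdel ?d) ba1))"
    using Circ by (simp add: bmul_assoc)
  also have "\<dots> = bmul ((bdel ^^ tsize (Circ c d)) x) (teval (Circ c d) bone)"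
    by (simp add: bcirc_def bmul_assoc funpow_add)
  finally show ?case .
qed

lemma upt_shift: "[q..<q+r] = map (\<lambda>i. q+i) [0..<r]"
  by (induction r) simp_all

lemma main: "is_circ v \<Longrightarrow> length ts = tsize v \<Longrightarrow> teval (subst v ts) \<gamma> =
           bmul (bprod (map (\<lambda>i. (bdel ^^ i) (teval (ts ! i) \<gamma>)) [0..<tsize v])) (teval v bone)"
proof (induction v arbitrary: ts)
  case X
  then obtain t where "ts = [t]" by (cases ts) auto
  then show ?case by (simp add: bprod_def)
next
  case (Star c d) then show ?case by simp
next
  case (Circ c d)
  let ?q = "tsize c" and ?r = "tsize d"
  define P where "P = (\<lambda>us n. bprod (map (\<lambda>i. (bdel ^^ i) (teval (us ! i) \<gamma>)) [0..<n]))"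
  let ?c = "teval c bone" and ?d = "teval d bone"
  have cc: "is_circ c" "is_circ d" using Circ.prems(1) by simp_all
  have lc: "length (take ?q ts) = ?q" and ld: "length (drop ?q ts) = ?r" using Circ.prems by auto
  have ql: "?q \<le> length ts" using Circ.prems by simp
  have IHc: "teval (subst c (take ?q ts)) \<gamma> = bmul (P (take ?q ts) ?q) ?c"
    unfolding P_def by (rule Circ.IH(1)[OF cc(1) lc])
  have IHd: "teval (subst d (drop ?q ts)) \<gamma> = bmul (P (drop ?q ts) ?r) ?d"
    unfolding P_def by (rule Circ.IH(2)[OF cc(2) ld])
  have split: "P ts (?q + ?r) = bmul (P (take ?q ts) ?q) ((bdel ^^ ?q) (P (drop ?q ts) ?r))"
  proof -
    have 1: "[0..<?q + ?r] = [0..<?q] @ map (\<lambda>i. ?q + i) [0..<?r]"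
      by (simp only: upt_add_eq_append[OF le0] upt_shift)
    have 2: "map (\<lambda>i. (bdel ^^ i) (teval (ts ! i) \<gamma>)) [0..<?q]
        = map (\<lambda>i. (bdel ^^ i) (teval (take ?q ts ! i) \<gamma>)) [0..<?q]"
      by (rule map_cong[OF HOL.refl]) simp
    have 3: "map (\<lambda>i. (bdel ^^ i) (teval (ts ! i) \<gamma>)) (map (\<lambda>i. ?q + i) [0..<?r])
        = map (bdel ^^ ?q) (map (\<lambda>i. (bdel ^^ i) (teval (drop ?q ts ! i) \<gamma>)) [0..<?r])"
      unfolding map_map by (rule map_cong[OF HOL.refl]) (simp add: ql funpow_add)
    show ?thesis
      unfolding P_def 1 map_append bprod_append 2 3 bdel_bprod ..
  qed
  have "teval (subst (Circ c d) ts) \<gamma> =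
      bmul (bmul (P (take ?q ts) ?q) ?c) (bmul (bdel (bmul (P (drop ?q ts) ?r) ?d)) ba1)"
    by (simp only: subst.simps teval.simps bcirc_def IHc IHd bmul_assoc)
  also have "\<dots> = bmul (P (take ?q ts) ?q) (bmul (bmul ?c (bdel (P (drop ?q ts) ?r))) (bmul (bdel ?d) ba1))"
    by (simp only: bdel_mul bmul_assoc)
  also have "\<dots> = bmul (P (take ?q ts) ?q) (bmul (bmul ((bdel ^^ ?q) (P (drop ?q ts) ?r)) ?c) (bmul (bdel ?d) ba1))"
    by (simp only: comm[OF cc(1)])
  also have "\<dots> = bmul (P ts (tsize (Circ c d))) (teval (Circ c d) bone)"
    by (simp only: tsize.simps split teval.simps bcirc_def bmul_assoc)
  finally show ?case unfolding P_def .
qed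

theorem lemma2p8:
  fixes v :: tm and ts :: "tm list" and \<gamma> :: B
  assumes "is_circ v"
    and "length ts = tsize v"
    and "\<forall>s \<in> set ts. is_star s"
  shows "teval (subst v ts) \<gamma> =
           bmul (bprod (map (\<lambda>i. (bdel ^^ i) (teval (ts ! i) \<gamma>)) [0..<tsize v])) (teval v bone)"
  using main assms(1,2) .

end
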